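(* Let $\mathfrak{g}$ be a direct product of finitely many Lie algebras of the form $\operatorname{Lie}(\operatorname{Isom}M)$ with $M = S^k$, $\mathbb{E}^k$, or $\mathbb{H}^k$ (the $k$ and the type of $M$ may vary between factors). Then $\mathfrak{g}$ contains no nonabelian nilpotent subalgebra.
   Context: $\operatorname{Lie}(\operatorname{Isom}M)$ is the Lie algebra of the isometry group of $M$: $\mathfrak{so}_{k+1}$ for $S^k$, $\mathbb{R}^k\rtimes\mathfrak{so}_k$ for $\mathbb{E}^k$, and $\mathfrak{so}_{1,k}$ for $\mathbb{H}^k$. *)

theory Defs
  imports "Jordan_Normal_Form.Matrix"
begin

text \<open>Model geometries: S^k, E^k, H^k.  Each Lie(Isom M) is realised by its standard
faithful representation as a Lie algebra of real (k+1)x(k+1) matrices with the commutator bracket.\<close>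

datatype geom = Sph | Euc | Hyp

definition lorentz_J :: "nat \<Rightarrow> real mat" where
  "lorentz_J n = mat n n (\<lambda>(i,j). if i = j then (if i = 0 then -1 else 1) else 0)"

text \<open>so_{k+1}; R^k semidirect so_k (affine matrices [[A,v],[0,0]] with A skew);
so_{1,k} (matrices X with X^T J + J X = 0, J = diag(-1,1,...,1)).\<close>
fun lie_isom :: "geom \<Rightarrow> nat \<Rightarrow> real mat set" where
  "lie_isom Sph k = {A \<in> carrier_mat (k+1) (k+1). transpose_mat A = - A}"
| "lie_isom Euc k = {A \<in> carrier_mat (k+1) (k+1).
      (\<forall>j<k+1. A $$ (k, j) = 0) \<and> (\<forall>i<k. \<forall>j<k. A $$ (j, i) = - A $$ (i, j))}"
| "lie_isom Hyp k = {A \<in> carrier_mat (k+1) (k+1).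
      transpose_mat A * lorentz_J (k+1) + lorentz_J (k+1) * A = 0\<^sub>m (k+1) (k+1)}"

text \<open>Direct product of the factors fs (list of (geometry, k)): elements are lists of
matrices, one per factor, with componentwise operations.\<close>
definition prod_carrier :: "(geom \<times> nat) list \<Rightarrow> real mat list set" where
  "prod_carrier fs = {xs. length xs = length fs \<and>
      (\<forall>i<length fs. xs ! i \<in> lie_isom (fst (fs ! i)) (snd (fs ! i)))}"

definition pzero :: "(geom \<times> nat) list \<Rightarrow> real mat list" where
  "pzero fs = map (\<lambda>(g,k). 0\<^sub>m (k+1) (k+1)) fs"

definition padd :: "real mat list \<Rightarrow> real mat list \<Rightarrow> real mat list" where
  "padd xs ys = map2 (+) xs ys"

definition psmult :: "real \<Rightarrow> real mat list \<Rightarrow> real mat list" where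
  "psmult c xs = map (\<lambda>A. c \<cdot>\<^sub>m A) xs"

definition pbr :: "real mat list \<Rightarrow> real mat list \<Rightarrow> real mat list" where
  "pbr xs ys = map2 (\<lambda>A B. A * B - B * A) xs ys"

definition is_subalgebra :: "(geom \<times> nat) list \<Rightarrow> real mat list set \<Rightarrow> bool" where
  "is_subalgebra fs S \<longleftrightarrow> S \<subseteq> prod_carrier fs \<and> pzero fs \<in> S \<and>
     (\<forall>x\<in>S. \<forall>y\<in>S. padd x y \<in> S) \<and> (\<forall>c. \<forall>x\<in>S. psmult c x \<in> S) \<and>
     (\<forall>x\<in>S. \<forall>y\<in>S. pbr x y \<in> S)"

inductive_set pspan :: "(geom \<times> nat) list \<Rightarrow> real mat list set \<Rightarrow> real mat list set"
  for fs G where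
  zero: "pzero fs \<in> pspan fs G"
| gen: "x \<in> G \<Longrightarrow> x \<in> pspan fs G"
| add: "x \<in> pspan fs G \<Longrightarrow> y \<in> pspan fs G \<Longrightarrow> padd x y \<in> pspan fs G"
| smult: "x \<in> pspan fs G \<Longrightarrow> psmult c x \<in> pspan fs G"

fun lcs :: "(geom \<times> nat) list \<Rightarrow> real mat list set \<Rightarrow> nat \<Rightarrow> real mat list set" where
  "lcs fs S 0 = S"
| "lcs fs S (Suc n) = pspan fs {pbr x y | x y. x \<in> S \<and> y \<in> lcs fs S n}"

definition is_nilpotent :: "(geom \<times> nat) list \<Rightarrow> real mat list set \<Rightarrow> bool" where
  "is_nilpotent fs S \<longleftrightarrow> (\<exists>n. lcs fs S n = {pzero fs})"

definition is_abelian :: "(geom \<times> nat) list \<Rightarrow> real mat list set \<Rightarrow> bool" where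
  "is_abelian fs S \<longleftrightarrow> (\<forall>x\<in>S. \<forall>y\<in>S. pbr x y = pzero fs)"

end

theory Submission
  imports Defs "Jordan_Normal_Form.Jordan_Normal_Form_Existence"
begin

lemma sum_list_swap_aux:
  fixes xs :: "(nat \<times> complex) list" and c :: "nat \<Rightarrow> complex"
  shows "(\<Sum>(m,a)\<leftarrow>xs. of_nat m * (\<Sum>j\<in>J. c j * a^j)) = (\<Sum>j\<in>J. c j * (\<Sum>(m,a)\<leftarrow>xs. of_nat m * a^j))"
proof (induction xs)
  case Nil then show ?case by simp
next
  case (Cons x xs)
  obtain m a where x: "x = (m,a)" by force
  show ?case using Cons by (simp add: x sum.distrib sum_distrib_left algebra_simps)
qed

lemma power_sum_zero:
  fixes xs :: "(nat \<times> complex) list"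
  assumes pos: "\<forall>(m,a)\<in>set xs. m > 0" and ps: "\<forall>k\<ge>1. (\<Sum>(m,a)\<leftarrow>xs. of_nat m * a^k) = 0"
  shows "\<forall>(m,a)\<in>set xs. a = 0"
proof (rule ccontr)
  assume "\<not> ?thesis"
  then obtain m0 t0 where mt: "(m0,t0) \<in> set xs" and t0: "t0 \<noteq> 0" by auto
  define T where "T = snd ` set xs - {0, t0}"
  define p :: "complex poly" where "p = [:0,1:] * (\<Prod>s\<in>T. [:-s,1:])"
  have fT: "finite T" unfolding T_def by auto
  have c0: "coeff p 0 = 0" unfolding p_def by (simp add: coeff_mult)
  have polyalt: "poly p a = (\<Sum>j\<in>{1..degree p}. coeff p j * a^j)" for a
  proof -
    have "poly p a = (\<Sum>j\<le>degree p. coeff p j * a^j)" by (simp add: poly_altdef)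
    also have "\<dots> = (\<Sum>j\<in>insert 0 {1..degree p}. coeff p j * a^j)"
      by (rule sum.cong) auto
    also have "\<dots> = (\<Sum>j\<in>{1..degree p}. coeff p j * a^j)" using c0 by simp
    finally show ?thesis .
  qed
  have "(\<Sum>(m,a)\<leftarrow>xs. of_nat m * poly p a) = (\<Sum>j\<in>{1..degree p}. coeff p j * (\<Sum>(m,a)\<leftarrow>xs. of_nat m * a^j))"
    unfolding polyalt by (rule sum_list_swap_aux)
  also have "\<dots> = 0" using ps by (intro sum.neutral) auto
  finally have S0: "(\<Sum>(m,a)\<leftarrow>xs. of_nat m * poly p a) = 0" .
  have pz: "poly p a = (if a = t0 then poly p t0 else 0)" if "a \<in> snd ` set xs" for a
  proof (cases "a = t0")
    case False
    show ?thesis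
    proof (cases "a = 0")
      case True then show ?thesis using False by (simp add: p_def)
    next
      case False2: False
      with that False have "a \<in> T" unfolding T_def by auto
      then have "poly (\<Prod>s\<in>T. [:-s,1:]) a = 0" using fT by (simp add: poly_prod prod_zero_iff)
      then show ?thesis using False by (simp add: p_def)
    qed
  qed simp
  have pt0: "poly p t0 \<noteq> 0"
    using fT t0 unfolding p_def by (auto simp: poly_prod prod_zero_iff T_def)
  have "(\<Sum>(m,a)\<leftarrow>xs. of_nat m * poly p a) = (\<Sum>(m,a)\<leftarrow>xs. of_nat m * (if a = t0 then poly p t0 else 0))"
    by (rule arg_cong[of _ _ sum_list], rule map_cong, simp, use pz in force)
  also have "\<dots> = of_nat (\<Sum>(m,a)\<leftarrow>xs. if a = t0 then m else 0) * poly p t0"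
    by (induction xs) (auto simp: algebra_simps)
  finally have "of_nat (\<Sum>(m,a)\<leftarrow>xs. if a = t0 then m else 0) * poly p t0 = 0" using S0 by simp
  with pt0 have Z: "(\<Sum>(m,a)\<leftarrow>xs. if a = t0 then m else 0) = 0" by simp
  have le: "m0 \<le> (\<Sum>(m,a)\<leftarrow>xs. if a = t0 then m else 0)"
    using member_le_sum_list[of "(\<lambda>(m,a). if a = t0 then m else 0) (m0,t0)" "map (\<lambda>(m,a). if a = t0 then m else 0) xs"] mt
    by force
  have "m0 = 0" using le unfolding Z by simp
  with mt pos show False by auto
qed

definition mtr :: "'a::comm_ring_1 mat \<Rightarrow> 'a" where
  "mtr A = (\<Sum>i<dim_row A. A $$ (i,i))"

lemma mtr_mult_entry:
  assumes "A \<in> carrier_mat n m" "B \<in> carrier_mat m n"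
  shows "mtr (A*B) = (\<Sum>i<n. \<Sum>j<m. A $$ (i,j) * B $$ (j,i))"
  using assms unfolding mtr_def by (auto simp: scalar_prod_def atLeast0LessThan intro!: sum.cong)

lemma mtr_comm:
  assumes "A \<in> carrier_mat n m" "B \<in> carrier_mat m n"
  shows "mtr (A*B) = mtr (B*A)"
  unfolding mtr_mult_entry[OF assms] mtr_mult_entry[OF assms(2,1)]
  by (subst sum.swap) (simp add: mult.commute)

lemma diag_mat_diag_block:
  assumes "\<forall>B\<in>set Bs. B \<in> carrier_mat (dim_row B) (dim_row B)"
  shows "diag_mat (diag_block_mat Bs) = concat (map diag_mat Bs)"
  using assms
proof (induction Bs)
  case Nil then show ?case by (simp add: diag_mat_def)
next
  case (Cons A As)
  let ?B = "diag_block_mat As"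
  have sq: "\<forall>B\<in>set As. dim_col B = dim_row B" using Cons.prems by auto
  have "dim_col ?B = dim_row ?B" unfolding dim_diag_block_mat using sq
    by (metis (mono_tags, lifting) map_eq_conv)
  then have B: "?B \<in> carrier_mat (dim_row ?B) (dim_row ?B)" by auto
  have A: "A \<in> carrier_mat (dim_row A) (dim_row A)" using Cons.prems by auto
  have IH: "diag_mat ?B = concat (map diag_mat As)" using Cons by auto
  have e: "diag_block_mat (A # As) = four_block_mat A (0\<^sub>m (dim_row A) (dim_col ?B)) (0\<^sub>m (dim_row ?B) (dim_col A)) ?B"
    by (simp add: Let_def)
  have "diag_mat (diag_block_mat (A # As)) = diag_mat A @ diag_mat ?B"
    unfolding e by (rule diag_four_block_mat[OF A B])
  then show ?case unfolding IH by simp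
qed

lemma diag_block_zero:
  assumes "\<forall>B\<in>set Bs. B = 0\<^sub>m (dim_row B) (dim_row B)"
  shows "diag_block_mat Bs = 0\<^sub>m (sum_list (map dim_row Bs)) (sum_list (map dim_row Bs))"
  using assms
proof (induction Bs)
  case Nil then show ?case by simp
next
  case (Cons A As)
  have A: "A = 0\<^sub>m (dim_row A) (dim_row A)" using Cons.prems by auto
  have IH: "diag_block_mat As = 0\<^sub>m (sum_list (map dim_row As)) (sum_list (map dim_row As))"
    using Cons by auto
  show ?case
    apply (simp add: Let_def IH)
    apply (subst A)
    apply (subst four_block_zero_mat[symmetric])
    using A by (metis index_zero_mat(2) index_zero_mat(3))
qed

lemma mtr_sum_list_diag: "mtr A = sum_list (diag_mat A)"
  unfolding mtr_def diag_mat_def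
  by (simp add: lessThan_atLeast0 sum_list_distinct_conv_sum_set)

lemma nilpotent_of_traces:
  fixes Z :: "real mat"
  assumes Z: "Z \<in> carrier_mat n n" and tr: "\<And>k. k \<ge> 1 \<Longrightarrow> mtr (Z ^\<^sub>m k) = 0"
  shows "Z ^\<^sub>m n = 0\<^sub>m n n"
proof -
  define A where "A = map_mat complex_of_real Z"
  have A: "A \<in> carrier_mat n n" using Z by (simp add: A_def)
  obtain as where "char_poly A = (\<Prod>a\<leftarrow>as. [:- a, 1:])" using char_poly_factorized[OF A] by blast
  then obtain n_as where jnf: "jordan_nf A n_as" using jordan_nf_exists[OF A] by blast
  let ?J = "jordan_matrix n_as"
  from jnf obtain P Q where wit: "similar_mat_wit A ?J P Q" and pos: "0 \<notin> fst ` set n_as"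
    unfolding jordan_nf_def similar_mat_def by blast
  have dA: "n = dim_row A" using A by auto
  note PQ = similar_mat_witD[OF dA wit]
  have Apow: "A ^\<^sub>m k = P * ?J ^\<^sub>m k * Q" for k by (rule similar_mat_wit_pow_id[OF wit])
  have Jk: "?J ^\<^sub>m k \<in> carrier_mat n n" for k using PQ(5) by auto
  have trA: "mtr (A ^\<^sub>m k) = mtr (?J ^\<^sub>m k)" for k
  proof -
    have "mtr (A ^\<^sub>m k) = mtr ((P * ?J ^\<^sub>m k) * Q)" by (simp add: Apow)
    also have "\<dots> = mtr (Q * (P * ?J ^\<^sub>m k))"
      by (rule mtr_comm[of _ n n], insert PQ Jk, auto)
    also have "Q * (P * ?J ^\<^sub>m k) = (Q * P) * ?J ^\<^sub>m k"
      using PQ Jk by (metis assoc_mult_mat)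
    also have "\<dots> = ?J ^\<^sub>m k" unfolding PQ(2) by (rule left_mult_one_mat[OF Jk])
    finally show ?thesis .
  qed
  have trAz: "mtr (A ^\<^sub>m k) = 0" if "k \<ge> 1" for k
  proof -
    have "A ^\<^sub>m k = map_mat complex_of_real (Z ^\<^sub>m k)"
      unfolding A_def by (rule of_real_hom.mat_hom_pow[OF Z, symmetric])
    then have "mtr (A ^\<^sub>m k) = complex_of_real (mtr (Z ^\<^sub>m k))"
      using Z by (simp add: mtr_def)
    then show ?thesis using tr[OF that] by simp
  qed
  have trJ: "mtr (?J ^\<^sub>m k) = (\<Sum>(m,a)\<leftarrow>n_as. of_nat m * a^k)" for k
  proof -
    have "?J ^\<^sub>m k = diag_block_mat (map (\<lambda>(n,a). (jordan_block n a) ^\<^sub>m k) n_as)"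
      by (rule jordan_matrix_pow)
    then have "diag_mat (?J ^\<^sub>m k) = concat (map diag_mat (map (\<lambda>(n,a). (jordan_block n a) ^\<^sub>m k) n_as))"
      by (simp, subst diag_mat_diag_block, auto)
    also have "\<dots> = concat (map (\<lambda>(n,a). replicate n (a^k)) n_as)"
      by (auto simp: diag_jordan_block_pow intro!: arg_cong[of _ _ concat])
    finally have "mtr (?J ^\<^sub>m k) = sum_list (concat (map (\<lambda>(n,a). replicate n (a^k)) n_as))"
      by (simp add: mtr_sum_list_diag)
    also have "\<dots> = (\<Sum>(m,a)\<leftarrow>n_as. of_nat m * a^k)"
      by (induction n_as) (auto simp: sum_list_replicate)
    finally show ?thesis .
  qed
  have "\<forall>(m,a)\<in>set n_as. a = 0"
    by (rule power_sum_zero, use pos in force, use trA trAz trJ in auto)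
  have sz: "sum_list (map fst n_as) = n" using PQ(5) by auto
  have "?J ^\<^sub>m n = diag_block_mat (map (\<lambda>(m,a). (jordan_block m a) ^\<^sub>m n) n_as)"
    by (rule jordan_matrix_pow)
  also have "\<dots> = 0\<^sub>m n n"
  proof -
    have "\<forall>B\<in>set (map (\<lambda>(m,a). (jordan_block m a) ^\<^sub>m n) n_as). B = 0\<^sub>m (dim_row B) (dim_row B)"
    proof
      fix B assume "B \<in> set (map (\<lambda>(m,a). (jordan_block m a) ^\<^sub>m n) n_as)"
      then obtain m a where ma: "(m,a) \<in> set n_as" "B = (jordan_block m a) ^\<^sub>m n" by auto
      have a0: "a = 0" using ma \<open>\<forall>(m,a)\<in>set n_as. a = 0\<close> by auto
      have "m \<in> set (map fst n_as)" using ma(1) by force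
      from member_le_sum_list[OF this] have "m \<le> n" using sz by simp
      have "(jordan_block m (0::complex)) ^\<^sub>m n = 0\<^sub>m m m"
        unfolding jordan_block_zero_pow using \<open>m \<le> n\<close> by (intro eq_matI) auto
      then show "B = 0\<^sub>m (dim_row B) (dim_row B)" using ma a0 by simp
    qed
    moreover have "map dim_row (map (\<lambda>(m,a). (jordan_block m a) ^\<^sub>m n) n_as) = map fst n_as"
      by (induction n_as) auto
    ultimately show ?thesis using diag_block_zero sz by metis
  qed
  finally have J0: "?J ^\<^sub>m n = 0\<^sub>m n n" .
  have "A ^\<^sub>m n = 0\<^sub>m n n" unfolding Apow[of n] J0
    using PQ(6,7) by (metis left_mult_zero_mat right_mult_zero_mat)
  then have "map_mat complex_of_real (Z ^\<^sub>m n) = map_mat complex_of_real (0\<^sub>m n n)"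
  proof -
    have z: "map_mat complex_of_real (0\<^sub>m n n) = 0\<^sub>m n n" by (rule eq_matI) auto
    show ?thesis using \<open>A ^\<^sub>m n = 0\<^sub>m n n\<close> unfolding A_def of_real_hom.mat_hom_pow[OF Z] z .
  qed
  then show ?thesis by (rule of_real_hom.mat_hom_inj)
qed

lemma sum_sq_zero:
  fixes f :: "nat \<Rightarrow> nat \<Rightarrow> real"
  assumes "(\<Sum>i<n. \<Sum>j<m. f i j * f i j) = 0" "i < n" "j < m"
  shows "f i j = 0"
proof -
  define g where "g i = (\<Sum>j<m. f i j * f i j)" for i
  have nn: "\<And>i. 0 \<le> g i" unfolding g_def by (intro sum_nonneg) auto
  have "(\<Sum>i<n. g i) = 0 \<longleftrightarrow> (\<forall>i\<in>{..<n}. g i = 0)" by (rule sum_nonneg_eq_0_iff) (auto simp: nn)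
  then have "g i = 0" using assms(1,2) unfolding g_def by auto
  moreover have "(\<Sum>j<m. f i j * f i j) = 0 \<longleftrightarrow> (\<forall>j\<in>{..<m}. f i j * f i j = 0)"
    by (rule sum_nonneg_eq_0_iff) auto
  ultimately have "f i j * f i j = 0" using assms(3) unfolding g_def by auto
  then show ?thesis by simp
qed

lemma sum_skew_sq:
  fixes f :: "nat \<Rightarrow> nat \<Rightarrow> real"
  assumes "\<forall>i<n. \<forall>j<n. f j i = - f i j"
  shows "(\<Sum>i<n. \<Sum>j<n. f i j * f j i) = - (\<Sum>i<n. \<Sum>j<n. f i j * f i j)"
proof -
  have "(\<Sum>i<n. \<Sum>j<n. f i j * f j i) = (\<Sum>i<n. \<Sum>j<n. - (f i j * f i j))"
    by (intro sum.cong refl) (metis assms lessThan_iff mult_minus_right)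
  then show ?thesis by (simp add: sum_negf)
qed

lemma sum_skew_vec:
  fixes f :: "nat \<Rightarrow> nat \<Rightarrow> real"
  assumes "\<forall>i<n. \<forall>j<n. f j i = - f i j" "l < n"
  shows "(\<Sum>i<n. f i l * w i) = - (\<Sum>i<n. f l i * w i)"
proof -
  have "(\<Sum>i<n. f i l * w i) = (\<Sum>i<n. - (f l i * w i))"
    by (intro sum.cong refl) (metis assms lessThan_iff mult_minus_left)
  then show ?thesis by (simp add: sum_negf)
qed

lemma euc_core:
  fixes x y z :: "nat \<Rightarrow> nat \<Rightarrow> real"
  assumes rowx: "\<forall>j<Suc k. x k j = 0" and rowy: "\<forall>j<Suc k. y k j = 0" and rowz: "\<forall>j<Suc k. z k j = 0"
    and skx: "\<forall>i<k. \<forall>j<k. x j i = - x i j" and sky: "\<forall>i<k. \<forall>j<k. y j i = - y i j"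
    and skz: "\<forall>i<k. \<forall>j<k. z j i = - z i j"
    and zdef: "\<forall>i<Suc k. \<forall>j<Suc k. z i j = (\<Sum>l<Suc k. x i l * y l j - y i l * x l j)"
    and cx: "\<forall>i<Suc k. \<forall>j<Suc k. (\<Sum>l<Suc k. x i l * z l j) = (\<Sum>l<Suc k. z i l * x l j)"
    and cy: "\<forall>i<Suc k. \<forall>j<Suc k. (\<Sum>l<Suc k. y i l * z l j) = (\<Sum>l<Suc k. z i l * y l j)"
    and tr: "(\<Sum>i<Suc k. \<Sum>j<Suc k. z i j * z j i) = 0"
  shows "\<forall>i<Suc k. \<forall>j<Suc k. z i j = 0"
proof -
  have zk: "z k j = 0" if "j \<le> k" for j using rowz that by auto
  have "(\<Sum>i<Suc k. \<Sum>j<Suc k. z i j * z j i) = (\<Sum>i<k. \<Sum>j<Suc k. z i j * z j i) + (\<Sum>j<Suc k. z k j * z j k)"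
    by (rule sum.lessThan_Suc)
  also have "(\<Sum>j<Suc k. z k j * z j k) = 0" using rowz by simp
  also have "(\<Sum>i<k. \<Sum>j<Suc k. z i j * z j i) = (\<Sum>i<k. \<Sum>j<k. z i j * z j i)"
  proof (rule sum.cong[OF refl])
    fix i assume "i \<in> {..<k}"
    then have "z k i = 0" using zk[of i] by simp
    then show "(\<Sum>j<Suc k. z i j * z j i) = (\<Sum>j<k. z i j * z j i)" by (simp add: sum.lessThan_Suc)
  qed
  finally have "(\<Sum>i<k. \<Sum>j<k. z i j * z i j) = 0"
    using tr sum_skew_sq[of k z, OF skz] by simp
  then have A0: "z i j = 0" if "i < k" "j < k" for i j using sum_sq_zero[of z] that by blast
  define w where "w i = z i k" for i
  have xw: "(\<Sum>l<k. x i l * w l) = 0" if "i < k" for i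
  proof -
    have "(\<Sum>l<Suc k. x i l * z l k) = (\<Sum>l<Suc k. z i l * x l k)" using cx that by simp
    moreover have "(\<Sum>l<Suc k. z i l * x l k) = 0"
      using A0 that rowx by (simp add: sum.lessThan_Suc)
    moreover have "(\<Sum>l<Suc k. x i l * z l k) = (\<Sum>l<k. x i l * w l)" by (simp add: sum.lessThan_Suc w_def zk)
    ultimately show ?thesis by simp
  qed
  have yw: "(\<Sum>l<k. y i l * w l) = 0" if "i < k" for i
  proof -
    have "(\<Sum>l<Suc k. y i l * z l k) = (\<Sum>l<Suc k. z i l * y l k)" using cy that by simp
    moreover have "(\<Sum>l<Suc k. z i l * y l k) = 0"
      using A0 that rowy by (simp add: sum.lessThan_Suc)
    moreover have "(\<Sum>l<Suc k. y i l * z l k) = (\<Sum>l<k. y i l * w l)" by (simp add: sum.lessThan_Suc w_def zk)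
    ultimately show ?thesis by simp
  qed
  have wdef: "w i = (\<Sum>l<k. x i l * y l k - y i l * x l k)" if "i < k" for i
    using zdef that rowx rowy by (simp add: sum.lessThan_Suc w_def)
  have "(\<Sum>i<k. w i * w i) = (\<Sum>i<k. \<Sum>l<k. w i * (x i l * y l k - y i l * x l k))"
    using wdef by (simp add: sum_distrib_left)
  also have "\<dots> = (\<Sum>l<k. \<Sum>i<k. w i * (x i l * y l k - y i l * x l k))" by (rule sum.swap)
  also have "\<dots> = (\<Sum>l<k. y l k * (\<Sum>i<k. x i l * w i) - x l k * (\<Sum>i<k. y i l * w i))"
    by (simp add: sum_distrib_left sum_subtractf algebra_simps)
  also have "\<dots> = 0"
  proof (rule sum.neutral, intro ballI)
    fix l assume l: "l \<in> {..<k}"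
    have "(\<Sum>i<k. x i l * w i) = - (\<Sum>i<k. x l i * w i)" using sum_skew_vec[OF skx] l by simp
    moreover have "(\<Sum>i<k. y i l * w i) = - (\<Sum>i<k. y l i * w i)" using sum_skew_vec[OF sky] l by simp
    ultimately show "y l k * (\<Sum>i<k. x i l * w i) - x l k * (\<Sum>i<k. y i l * w i) = 0"
      using xw yw l by simp
  qed
  finally have "(\<Sum>i<k. w i * w i) = 0" .
  then have W0: "w i = 0" if "i < k" for i
  proof -
    have "(\<Sum>i<k. w i * w i) = 0 \<longleftrightarrow> (\<forall>i\<in>{..<k}. w i * w i = 0)"
      by (rule sum_nonneg_eq_0_iff) auto
    then show ?thesis using \<open>(\<Sum>i<k. w i * w i) = 0\<close> that by auto
  qed
  show ?thesis
  proof (intro allI impI)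
    fix i j assume ij: "i < Suc k" "j < Suc k"
    show "z i j = 0"
    proof (cases "i = k")
      case True then show ?thesis using rowz ij by simp
    next
      case False
      then have "i < k" using ij by simp
      show ?thesis
      proof (cases "j = k")
        case True then show ?thesis using W0 \<open>i < k\<close> w_def by simp
      next
        case False then show ?thesis using A0 \<open>i < k\<close> ij by simp
      qed
    qed
  qed
qed

lemma mult_ent:
  assumes "A \<in> carrier_mat n n" "B \<in> carrier_mat n n" "i < n" "j < n"
  shows "(A*B) $$ (i,j) = (\<Sum>l<n. A $$ (i,l) * B $$ (l,j))"
  using assms by (auto simp: scalar_prod_def atLeast0LessThan intro!: sum.cong)

lemma mtr_minus:
  assumes "A \<in> carrier_mat n n" "B \<in> carrier_mat n n"
  shows "mtr (A - B) = mtr A - mtr B"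
  using assms unfolding mtr_def by (auto simp: sum_subtractf)

lemma eq_of_minus_zero:
  fixes A B :: "'a::ab_group_add mat"
  assumes "A \<in> carrier_mat n n" "B \<in> carrier_mat n n" "A - B = 0\<^sub>m n n"
  shows "A = B"
proof (rule eq_matI)
  fix i j assume ij: "i < dim_row B" "j < dim_col B"
  then have ij': "i < n" "j < n" using assms by auto
  have "(A - B) $$ (i,j) = A $$ (i,j) - B $$ (i,j)" using ij by (rule index_minus_mat)
  moreover have "(A - B) $$ (i,j) = 0" using assms(3) ij' by simp
  ultimately show "A $$ (i,j) = B $$ (i,j)" by simp
qed (use assms in auto)

lemma tr_comm_zero:
  fixes X Y W :: "'a::comm_ring_1 mat"
  assumes X: "X \<in> carrier_mat n n" and Y: "Y \<in> carrier_mat n n" and W: "W \<in> carrier_mat n n"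
    and XW: "X * W = W * X"
  shows "mtr ((X*Y - Y*X) * W) = 0"
proof -
  have XY: "X*Y \<in> carrier_mat n n" "Y*X \<in> carrier_mat n n" using X Y by auto
  have "(X*Y - Y*X) * W = X*Y*W - Y*X*W"
    using XY W by (simp add: minus_mult_distrib_mat[of _ n n])
  then have "mtr ((X*Y - Y*X) * W) = mtr (X*Y*W) - mtr (Y*X*W)"
    using mtr_minus[of "X*Y*W" n "Y*X*W"] XY W by simp
  also have "Y*X*W = Y*(W*X)" using X Y W XW by (simp add: assoc_mult_mat[of _ n n _ n _ n])
  also have "\<dots> = (Y*W)*X" using X Y W by (simp add: assoc_mult_mat[of _ n n _ n _ n])
  also have "mtr ((Y*W)*X) = mtr (X*(Y*W))" using X Y W by (intro mtr_comm[of _ n n]) auto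
  also have "X*(Y*W) = X*Y*W" using X Y W by (simp add: assoc_mult_mat[of _ n n _ n _ n])
  finally show ?thesis by simp
qed

lemma sph_case:
  fixes Z :: "real mat"
  assumes Z: "Z \<in> carrier_mat n n" and sk: "transpose_mat Z = - Z" and tr: "mtr (Z*Z) = 0"
  shows "Z = 0\<^sub>m n n"
proof -
  have skew: "Z $$ (j,i) = - Z $$ (i,j)" if "i < n" "j < n" for i j
  proof -
    have "transpose_mat Z $$ (i,j) = (- Z) $$ (i,j)" using sk by simp
    then show ?thesis using Z that by simp
  qed
  have "(\<Sum>i<n. \<Sum>j<n. Z $$ (i,j) * Z $$ (j,i)) = 0" using tr mtr_mult_entry[OF Z Z] by simp
  then have "(\<Sum>i<n. \<Sum>j<n. Z $$ (i,j) * Z $$ (i,j)) = 0"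
  proof -
    have sk2: "\<forall>i<n. \<forall>j<n. Z $$ (j,i) = - Z $$ (i,j)" using skew by blast
    show ?thesis using sum_skew_sq[of n "\<lambda>i j. Z $$ (i,j)", OF sk2] \<open>(\<Sum>i<n. \<Sum>j<n. Z $$ (i,j) * Z $$ (j,i)) = 0\<close> by simp
  qed
  then have z0: "Z $$ (i,j) = 0" if "i < n" "j < n" for i j
    using sum_sq_zero[of "\<lambda>i j. Z $$ (i,j)" n n i j] that by blast
  show ?thesis
  proof (rule eq_matI)
    fix i j assume "i < dim_row (0\<^sub>m n n :: real mat)" "j < dim_col (0\<^sub>m n n :: real mat)"
    then show "Z $$ (i,j) = 0\<^sub>m n n $$ (i,j)" using z0 by simp
  qed (use Z in auto)
qed

definition sg :: "nat \<Rightarrow> real" where "sg i = (if i = 0 then -1 else 1)"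
definition mv :: "nat \<Rightarrow> (nat \<Rightarrow> nat \<Rightarrow> real) \<Rightarrow> (nat \<Rightarrow> real) \<Rightarrow> nat \<Rightarrow> real" where
  "mv n a u = (\<lambda>i. if i < n then (\<Sum>j<n. a i j * u j) else 0)"
definition lf :: "nat \<Rightarrow> (nat \<Rightarrow> real) \<Rightarrow> (nat \<Rightarrow> real) \<Rightarrow> real" where
  "lf n u v = (\<Sum>i<n. sg i * u i * v i)"
definition lsk :: "nat \<Rightarrow> (nat \<Rightarrow> nat \<Rightarrow> real) \<Rightarrow> bool" where
  "lsk n a = (\<forall>i<n. \<forall>j<n. sg j * a j i = - (sg i * a i j))"
definition canon :: "nat \<Rightarrow> (nat \<Rightarrow> real) \<Rightarrow> bool" where
  "canon n u = (\<forall>i. n \<le> i \<longrightarrow> u i = 0)"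

lemma sg_sq[simp]: "sg i * sg i = 1" by (simp add: sg_def)

lemma mv_add: "mv n a (\<lambda>i. u i + v i) = (\<lambda>i. mv n a u i + mv n a v i)"
  unfolding mv_def by (auto simp: algebra_simps sum.distrib)
lemma mv_diff: "mv n a (\<lambda>i. u i - v i) = (\<lambda>i. mv n a u i - mv n a v i)"
  unfolding mv_def by (auto simp: algebra_simps sum_subtractf)
lemma mv_smult: "mv n a (\<lambda>i. c * u i) = (\<lambda>i. c * mv n a u i)"
  unfolding mv_def by (auto simp: algebra_simps sum_distrib_left)
lemma mv_zero: "mv n a (\<lambda>i. 0) = (\<lambda>i. 0)"
  unfolding mv_def by auto
lemma mv_canon: "canon n (mv n a u)"
  unfolding mv_def canon_def by auto
lemma mv_cong: "(\<And>j. j < n \<Longrightarrow> u j = v j) \<Longrightarrow> mv n a u = mv n a v"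
  unfolding mv_def by (auto intro!: sum.cong)

lemma lf_sym: "lf n u v = lf n v u" unfolding lf_def by (simp add: algebra_simps)
lemma lf_add_left: "lf n (\<lambda>i. u i + v i) w = lf n u w + lf n v w"
  unfolding lf_def by (simp add: algebra_simps sum.distrib)
lemma lf_diff_left: "lf n (\<lambda>i. u i - v i) w = lf n u w - lf n v w"
  unfolding lf_def by (simp add: algebra_simps sum_subtractf)
lemma lf_smult_left: "lf n (\<lambda>i. c * u i) w = c * lf n u w"
  unfolding lf_def by (simp add: algebra_simps sum_distrib_left)
lemma lf_add_right: "lf n w (\<lambda>i. u i + v i) = lf n w u + lf n w v"
  unfolding lf_def by (simp add: algebra_simps sum.distrib)
lemma lf_diff_right: "lf n w (\<lambda>i. u i - v i) = lf n w u - lf n w v"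
  unfolding lf_def by (simp add: algebra_simps sum_subtractf)
lemma lf_smult_right: "lf n w (\<lambda>i. c * u i) = c * lf n w u"
  unfolding lf_def by (simp add: algebra_simps sum_distrib_left)
lemma lf_zero_right: "lf n w (\<lambda>i. 0) = 0" unfolding lf_def by simp
lemma lf_zero_left: "lf n (\<lambda>i. 0) w = 0" unfolding lf_def by simp

lemma lf_skew:
  assumes "lsk n a"
  shows "lf n (mv n a u) v = - lf n u (mv n a v)"
proof -
  have "lf n (mv n a u) v = (\<Sum>i<n. \<Sum>j<n. sg i * a i j * u j * v i)"
    unfolding lf_def mv_def by (simp add: sum_distrib_left sum_distrib_right algebra_simps)
  also have "\<dots> = (\<Sum>j<n. \<Sum>i<n. sg i * a i j * u j * v i)" by (rule sum.swap)
  also have "\<dots> = (\<Sum>j<n. \<Sum>i<n. - (sg j * a j i * u j * v i))"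
  proof (rule sum.cong[OF refl], rule sum.cong[OF refl])
    fix j i assume "j \<in> {..<n}" "i \<in> {..<n}"
    then have h: "sg j * a j i = - (sg i * a i j)" using assms unfolding lsk_def by blast
    have "- (sg j * a j i * u j * v i) = - ((sg j * a j i) * (u j * v i))" by (simp only: mult.assoc)
    also have "\<dots> = (sg i * a i j) * (u j * v i)" by (simp only: h minus_mult_left minus_minus)
    also have "\<dots> = sg i * a i j * u j * v i" by (simp only: mult.assoc)
    finally show "sg i * a i j * u j * v i = - (sg j * a j i * u j * v i)" by simp
  qed
  also have "\<dots> = - lf n u (mv n a v)"
    unfolding lf_def mv_def by (simp add: sum_distrib_left sum_negf algebra_simps)
  finally show ?thesis .
qed

lemma lf_self_zero:
  assumes w0: "w 0 = 0" and ww: "lf n w w = 0" and i: "i < n"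
  shows "w i = 0"
proof -
  have "lf n w w = (\<Sum>j<n. w j * w j)"
    unfolding lf_def using w0 by (intro sum.cong refl) (auto simp: sg_def)
  then have "(\<Sum>j<n. w j * w j) = 0" using ww by simp
  moreover have "(\<Sum>j<n. w j * w j) = 0 \<longleftrightarrow> (\<forall>j\<in>{..<n}. w j * w j = 0)"
    by (rule sum_nonneg_eq_0_iff) auto
  ultimately show ?thesis using i by auto
qed

lemma null_parallel:
  assumes pp: "lf n p p = 0" and qq: "lf n q q = 0" and pq: "lf n p q = 0" and q0: "q 0 \<noteq> 0"
    and cp: "canon n p" and cq: "canon n q"
  shows "p = (\<lambda>i. (p 0 / q 0) * q i)"
proof
  fix i
  define w where "w = (\<lambda>i. q 0 * p i - p 0 * q i)"
  have "lf n w w = lf n (\<lambda>i. q 0 * p i) w - lf n (\<lambda>i. p 0 * q i) w"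
    unfolding w_def by (rule lf_diff_left)
  also have "\<dots> = q 0 * lf n p w - p 0 * lf n q w" by (simp only: lf_smult_left)
  also have "lf n p w = q 0 * lf n p p - p 0 * lf n p q"
    unfolding w_def by (simp only: lf_diff_right lf_smult_right)
  also have "lf n q w = q 0 * lf n q p - p 0 * lf n q q"
    unfolding w_def by (simp only: lf_diff_right lf_smult_right)
  finally have "lf n w w = q 0 * (q 0 * lf n p p - p 0 * lf n p q) - p 0 * (q 0 * lf n q p - p 0 * lf n q q)" .
  then have ww: "lf n w w = 0" using pp qq pq lf_sym[of n q p] by simp
  have w0: "w 0 = 0" unfolding w_def by simp
  show "p i = (p 0 / q 0) * q i"
  proof (cases "i < n")
    case True
    then have "w i = 0" using lf_self_zero[OF w0 ww] by simp
    then show ?thesis using q0 unfolding w_def by (simp add: field_simps)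
  next
    case False then show ?thesis using cp cq unfolding canon_def by simp
  qed
qed

lemma null_nz0:
  assumes "lf n q q = 0" "i < n" "q i \<noteq> 0"
  shows "q 0 \<noteq> 0"
  using lf_self_zero[of q n i] assms by auto

lemma pw_add: "(mv n a ^^ m) (\<lambda>i. u i + v i) = (\<lambda>i. (mv n a ^^ m) u i + (mv n a ^^ m) v i)"
  by (induction m) (simp_all add: mv_add)
lemma pw_diff: "(mv n a ^^ m) (\<lambda>i. u i - v i) = (\<lambda>i. (mv n a ^^ m) u i - (mv n a ^^ m) v i)"
  by (induction m) (simp_all add: mv_diff)
lemma pw_smult: "(mv n a ^^ m) (\<lambda>i. c * u i) = (\<lambda>i. c * (mv n a ^^ m) u i)"
  by (induction m) (simp_all add: mv_smult)
lemma pw_zero: "(mv n a ^^ m) (\<lambda>i. 0) = (\<lambda>i. 0)"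
  by (induction m) (simp_all add: mv_zero)
lemma pw_canon: "m \<ge> 1 \<Longrightarrow> canon n ((mv n a ^^ m) u)"
  by (cases m) (simp_all add: mv_canon)

lemma pw_skew:
  assumes "lsk n a"
  shows "lf n ((mv n a ^^ m) u) v = (-1)^m * lf n u ((mv n a ^^ m) v)"
proof (induction m arbitrary: v)
  case 0 then show ?case by simp
next
  case (Suc m)
  have "lf n ((mv n a ^^ Suc m) u) v = lf n (mv n a ((mv n a ^^ m) u)) v" by simp
  also have "\<dots> = - lf n ((mv n a ^^ m) u) (mv n a v)" by (rule lf_skew[OF assms])
  also have "\<dots> = - ((-1)^m * lf n u ((mv n a ^^ m) (mv n a v)))" using Suc by simp
  also have "(mv n a ^^ m) (mv n a v) = (mv n a ^^ Suc m) v" by (simp add: funpow_swap1)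
  finally show ?case by simp
qed

lemma mv_comp:
  assumes "i < n"
  shows "mv n x (mv n y u) i = (\<Sum>j<n. (\<Sum>l<n. x i l * y l j) * u j)"
proof -
  have "mv n x (mv n y u) i = (\<Sum>l<n. x i l * (\<Sum>j<n. y l j * u j))"
    using assms unfolding mv_def by (auto intro!: sum.cong)
  also have "\<dots> = (\<Sum>l<n. \<Sum>j<n. x i l * y l j * u j)"
    by (simp add: sum_distrib_left mult.assoc)
  also have "\<dots> = (\<Sum>j<n. \<Sum>l<n. x i l * y l j * u j)" by (rule sum.swap)
  also have "\<dots> = (\<Sum>j<n. (\<Sum>l<n. x i l * y l j) * u j)"
    by (simp add: sum_distrib_right)
  finally show ?thesis .
qed

lemma mv_commute:
  assumes cx: "\<forall>i<n. \<forall>j<n. (\<Sum>l<n. x i l * z l j) = (\<Sum>l<n. z i l * x l j)"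
  shows "mv n x (mv n z u) = mv n z (mv n x u)"
proof
  fix i show "mv n x (mv n z u) i = mv n z (mv n x u) i"
  proof (cases "i < n")
    case True
    then show ?thesis unfolding mv_comp[OF True] using cx True by (intro sum.cong) auto
  next
    case False then show ?thesis unfolding mv_def by simp
  qed
qed

lemma pw_commute:
  assumes cx: "\<forall>i<n. \<forall>j<n. (\<Sum>l<n. x i l * z l j) = (\<Sum>l<n. z i l * x l j)"
  shows "mv n x ((mv n z ^^ m) u) = (mv n z ^^ m) (mv n x u)"
  by (induction m) (simp_all add: mv_commute[OF cx])

lemma mv_bracket:
  assumes zdef: "\<forall>i<n. \<forall>j<n. z i j = (\<Sum>l<n. x i l * y l j - y i l * x l j)"
  shows "mv n z u = (\<lambda>i. mv n x (mv n y u) i - mv n y (mv n x u) i)"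
proof
  fix i show "mv n z u i = mv n x (mv n y u) i - mv n y (mv n x u) i"
  proof (cases "i < n")
    case True
    have "mv n z u i = (\<Sum>j<n. (\<Sum>l<n. x i l * y l j - y i l * x l j) * u j)"
      using True zdef unfolding mv_def by (auto intro!: sum.cong)
    also have "\<dots> = (\<Sum>j<n. (\<Sum>l<n. x i l * y l j) * u j) - (\<Sum>j<n. (\<Sum>l<n. y i l * x l j) * u j)"
      by (simp add: sum_subtractf left_diff_distrib)
    finally show ?thesis unfolding mv_comp[OF True] .
  next
    case False then show ?thesis unfolding mv_def by simp
  qed
qed

declare lf_zero_right[simp] lf_zero_left[simp]

lemma hyp_core:
  fixes x y z :: "nat \<Rightarrow> nat \<Rightarrow> real"
  assumes lx: "lsk n x" and ly: "lsk n y" and lz: "lsk n z"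
    and zdef: "\<forall>i<n. \<forall>j<n. z i j = (\<Sum>l<n. x i l * y l j - y i l * x l j)"
    and cx: "\<forall>i<n. \<forall>j<n. (\<Sum>l<n. x i l * z l j) = (\<Sum>l<n. z i l * x l j)"
    and cy: "\<forall>i<n. \<forall>j<n. (\<Sum>l<n. y i l * z l j) = (\<Sum>l<n. z i l * y l j)"
    and nil: "\<And>u. (mv n z ^^ n) u = (\<lambda>i. 0)"
  shows "\<forall>i<n. \<forall>j<n. z i j = 0"
proof (rule ccontr)
  assume "\<not> ?thesis"
  then obtain i0 j0 where ij0: "i0 < n" "j0 < n" "z i0 j0 \<noteq> 0" by blast
  define f where "f = mv n z"
  define X where "X = mv n x"
  define Y where "Y = mv n y"
  define P where "P m = (f ^^ m)" for m
  note defs = f_def X_def Y_def P_def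
  define e where "e = (\<lambda>j. if j = j0 then 1 else 0 :: real)"
  have fe: "f e i0 = z i0 j0" unfolding f_def mv_def e_def using ij0 by (simp add: if_distrib cong: if_cong)
  define M where "M = {m. \<exists>u. P m u \<noteq> (\<lambda>i. 0)}"
  have P0: "P m (\<lambda>i. 0) = (\<lambda>i. 0)" for m unfolding P_def f_def by (rule pw_zero)
  have Padd: "P (a + b) u = P a (P b u)" for a b u unfolding P_def by (simp add: funpow_add)
  have big: "P m u = (\<lambda>i. 0)" if "m \<ge> n" for m u
  proof -
    have "P m u = P (m - n) (P n u)" using Padd[of "m - n" n u] that by simp
    also have "P n u = (\<lambda>i. 0)" unfolding P_def f_def by (rule nil)
    finally show ?thesis using P0 by simp
  qed
  have "1 \<in> M" unfolding M_def P_def using fe ij0 by (auto intro!: exI[of _ e])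
  have Mfin: "M \<subseteq> {..<n}" unfolding M_def using big by (auto simp: not_less[symmetric])
  define m where "m = Max M"
  have mM: "m \<in> M" unfolding m_def using Mfin \<open>1 \<in> M\<close> finite_subset by (intro Max_in) auto
  have m1: "m \<ge> 1" unfolding m_def using Mfin \<open>1 \<in> M\<close> finite_subset by (intro Max_ge) auto
  have hi: "P m' u = (\<lambda>i. 0)" if "m' > m" for m' u
  proof (rule ccontr)
    assume "P m' u \<noteq> (\<lambda>i. 0)"
    then have "m' \<in> M" unfolding M_def by blast
    then have "m' \<le> m" unfolding m_def using Mfin finite_subset by (intro Max_ge) auto
    with that show False by simp
  qed
  obtain u0 where u0: "P m u0 \<noteq> (\<lambda>i. 0)" using mM unfolding M_def by blast
  define n0 where "n0 = P m u0"
  have Pcanon: "canon n (P a u)" if "a \<ge> 1" for a u unfolding P_def f_def using that by (rule pw_canon)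
  have cn0: "canon n n0" unfolding n0_def using Pcanon m1 by simp
  obtain i1 where i1: "i1 < n" "n0 i1 \<noteq> 0"
  proof -
    from u0 obtain i where "n0 i \<noteq> 0" unfolding n0_def by (meson ext)
    moreover then have "i < n" using cn0 unfolding canon_def by (meson not_less)
    ultimately show ?thesis using that by blast
  qed
  have Pskew: "lf n (P a u) v = (-1)^a * lf n u (P a v)" for a u v
    unfolding P_def f_def by (rule pw_skew[OF lz])
  have iso: "lf n (P a u) (P b v) = 0" if "a + b > m" for a b u v
  proof -
    have "lf n (P a u) (P b v) = (-1)^a * lf n u (P a (P b v))" by (rule Pskew)
    also have "P a (P b v) = P (a+b) v" by (simp add: Padd)
    also have "\<dots> = (\<lambda>i. 0)" using hi that by simp
    finally show ?thesis by (simp add: lf_zero_right)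
  qed
  have n0null: "lf n n0 n0 = 0" unfolding n0_def using iso m1 by simp
  have n00: "n0 0 \<noteq> 0" using null_nz0[OF n0null i1] .
  have par: "P m v = (\<lambda>i. (P m v 0 / n0 0) * n0 i)" for v
  proof (rule null_parallel)
    have mm: "m < m + m" using m1 by simp
    show "lf n (P m v) (P m v) = 0" by (rule iso[OF mm])
    show "lf n (P m v) n0 = 0" unfolding n0_def by (rule iso[OF mm])
    show "lf n n0 n0 = 0" by (rule n0null)
    show "n0 0 \<noteq> 0" by (rule n00)
    show "canon n (P m v)" using Pcanon m1 by simp
    show "canon n n0" by (rule cn0)
  qed
  have lin_add: "P a (\<lambda>i. u i + v i) = (\<lambda>i. P a u i + P a v i)" for a u v
    unfolding P_def f_def by (rule pw_add)
  have lin_smult: "P a (\<lambda>i. c * u i) = (\<lambda>i. c * P a u i)" for a c u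
    unfolding P_def f_def by (rule pw_smult)
  have fsm: "f (\<lambda>i. c * u i) = (\<lambda>i. c * f u i)" for c u unfolding f_def by (rule mv_smult)
  have Psuc: "P (Suc a) u = f (P a u)" for a u unfolding P_def by simp
  have m2: "m \<le> 2"
  proof (rule ccontr)
    assume "\<not> m \<le> 2"
    then have m3: "m \<ge> 3" by simp
    define B where "B = P (m - 1)"
    have n0B: "n0 = B (f u0)" unfolding n0_def B_def using Padd[of "m-1" 1 u0] m3 by (simp add: P_def)
    have "B u0 = (\<lambda>i. (B u0 0 / n0 0) * n0 i)"
      unfolding n0B
    proof (rule null_parallel)
      show "lf n (B u0) (B u0) = 0" "lf n (B (f u0)) (B (f u0)) = 0" "lf n (B u0) (B (f u0)) = 0"
        unfolding B_def using iso m3 by auto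
      show "B (f u0) 0 \<noteq> 0" using n00 n0B by simp
      show "canon n (B u0)" "canon n (B (f u0))" unfolding B_def using Pcanon m3 by auto
    qed
    then have "P m u0 = f (\<lambda>i. (B u0 0 / n0 0) * n0 i)"
      using Psuc[of "m-1" u0] m3 unfolding B_def by simp
    also have "\<dots> = (\<lambda>i. (B u0 0 / n0 0) * f n0 i)" by (rule fsm)
    also have "f n0 = P (Suc m) u0" unfolding n0_def by (simp add: Psuc)
    also have "\<dots> = (\<lambda>i. 0)" using hi by simp
    finally show False using u0 by simp
  qed
  define nn where "nn = (\<Sum>i<n. n0 i * n0 i)"
  have nnpos: "nn > 0"
  proof -
    have "0 < n0 i1 * n0 i1" using i1(2) by (metis linorder_neq_iff mult_neg_neg mult_pos_pos)
    also have "\<dots> \<le> nn" unfolding nn_def using i1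
      by (intro member_le_sum) auto
    finally show ?thesis .
  qed
  define u1 where "u1 = (\<lambda>i. sg i * n0 i / nn)"
  have lf1: "lf n n0 u1 = 1"
  proof -
    have "lf n n0 u1 = (\<Sum>i<n. n0 i * n0 i) / nn"
    proof -
      show ?thesis unfolding lf_def u1_def sum_divide_distrib times_divide_eq_right
        by (rule sum.cong[OF refl]) (simp add: sg_def)
    qed
    then show ?thesis using nnpos unfolding nn_def by simp
  qed
  have fu0: "P m u0 0 / n0 0 = 1" using n00 unfolding n0_def by simp
  show False
  proof (cases "m = 1")
    case True
    have fpar: "f v = (\<lambda>i. (f v 0 / n0 0) * n0 i)" for v using par[of v] True by (simp add: P_def)
    have key: "(f v 0 / n0 0) * lf n n0 v = 0" for v
    proof -
      have "lf n (f v) v = - lf n v (f v)" unfolding f_def by (rule lf_skew[OF lz])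
      then have "lf n (f v) v = 0" using lf_sym[of n v "f v"] by simp
      moreover have "lf n (f v) v = lf n (\<lambda>i. (f v 0 / n0 0) * n0 i) v"
        by (rule arg_cong[where f="\<lambda>w. lf n w v", OF fpar])
      moreover have "\<dots> = (f v 0 / n0 0) * lf n n0 v" by (rule lf_smult_left)
      ultimately show ?thesis by simp
    qed
    have l1: "f u1 0 / n0 0 = 0" using key[of u1] lf1 by simp
    have l0: "f u0 0 / n0 0 = 1" using fu0 True by (simp add: P_def)
    have lf0: "lf n n0 u0 = 0" using key[of u0] l0 by simp
    have fadd: "f (\<lambda>i. u0 i + u1 i) = (\<lambda>i. f u0 i + f u1 i)" unfolding f_def by (rule mv_add)
    have "f (\<lambda>i. u0 i + u1 i) 0 / n0 0 = 1" using l0 l1 unfolding fadd by (simp add: add_divide_distrib)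
    moreover have "lf n n0 (\<lambda>i. u0 i + u1 i) = 1" using lf0 lf1 by (simp add: lf_add_right)
    ultimately show False using key[of "\<lambda>i. u0 i + u1 i"] by simp
  next
    case False
    with m1 m2 have m2': "m = 2" by simp
    define A where "A = P 2"
    have Asym: "lf n (A v) w = lf n v (A w)" for v w unfolding A_def using Pskew[of 2] by simp
    have Apar: "A v = (\<lambda>i. (A v 0 / n0 0) * n0 i)" for v unfolding A_def using par m2' by simp
    define c where "c = A u1 0 / n0 0"
    have ell: "A v 0 / n0 0 = c * lf n v n0" for v
    proof -
      have "lf n (A v) u1 = lf n v (A u1)" by (rule Asym)
      moreover have "lf n (A v) u1 = (A v 0 / n0 0) * lf n n0 u1"
        by (subst arg_cong[where f="\<lambda>w. lf n w u1", OF Apar[of v]]) (rule lf_smult_left)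
      moreover have "lf n v (A u1) = c * lf n v n0"
        unfolding c_def by (subst arg_cong[where f="\<lambda>w. lf n v w", OF Apar[of u1]]) (rule lf_smult_right)
      ultimately have "(A v 0 / n0 0) * lf n n0 u1 = c * lf n v n0" by simp
      then show ?thesis using lf1 by simp
    qed
    have Aform: "A v = (\<lambda>i. (c * lf n v n0) * n0 i)" for v using Apar[of v] ell[of v] by simp
    have "c * lf n u0 n0 = 1" using ell[of u0] fu0 m2' by (simp add: A_def)
    then have c0: "c \<noteq> 0" by auto
    have lf1': "lf n u1 n0 = 1" using lf1 lf_sym by metis
    have fn0: "f n0 = (\<lambda>i. 0)" unfolding n0_def using hi[of "Suc m" u0] by (simp add: Psuc)
    have kill: "W n0 = (\<lambda>i. 0)"
      if lw: "lsk n w" and cw: "\<forall>i<n. \<forall>j<n. (\<Sum>l<n. w i l * z l j) = (\<Sum>l<n. z i l * w l j)"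
        and Wd: "W = mv n w" for w W
    proof -
      have comm: "W (A v) = A (W v)" for v
        unfolding Wd A_def P_def f_def by (rule pw_commute[OF cw])
      have Wsm: "W (\<lambda>i. c' * u i) = (\<lambda>i. c' * W u i)" for c' u unfolding Wd by (rule mv_smult)
      define a where "a = lf n u1 (W n0)"
      have "W (A u1) = (\<lambda>i. c * W n0 i)" unfolding Aform lf1' using Wsm by simp
      moreover have "A (W u1) = (\<lambda>i. (c * (- a)) * n0 i)"
      proof -
        have "lf n (W u1) n0 = - lf n u1 (W n0)" unfolding Wd by (rule lf_skew[OF lw])
        then show ?thesis unfolding Aform a_def by simp
      qed
      ultimately have "(\<lambda>i. c * W n0 i) = (\<lambda>i. (c * (- a)) * n0 i)" using comm by simp
      then have Wn0: "W n0 = (\<lambda>i. (- a) * n0 i)" using c0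
        by (metis (no_types, lifting) ext mult.assoc mult_left_cancel)
      have "a = lf n u1 (W n0)" by (simp add: a_def)
      also have "\<dots> = lf n u1 (\<lambda>i. (- a) * n0 i)" unfolding Wn0 ..
      also have "\<dots> = - a" using lf1' by (subst lf_smult_right) simp
      finally have "a = 0" by simp
      then show ?thesis using Wn0 by simp
    qed
    have Xn0: "X n0 = (\<lambda>i. 0)" by (rule kill[OF lx cx]) (simp add: X_def)
    have Yn0: "Y n0 = (\<lambda>i. 0)" by (rule kill[OF ly cy]) (simp add: Y_def)
    have perp: "\<exists>mu. f v = (\<lambda>i. mu * n0 i)" if "lf n v n0 = 0" for v
    proof -
      have "f v = (\<lambda>i. (f v 0 / n0 0) * n0 i)"
      proof (rule null_parallel)
        have "lf n (f v) (f v) = - lf n v (f (f v))" unfolding f_def by (rule lf_skew[OF lz])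
        also have "f (f v) = A v" unfolding A_def P_def by (simp add: numeral_2_eq_2)
        also have "lf n v (A v) = 0" unfolding Aform using that by (simp add: lf_smult_right)
        finally show "lf n (f v) (f v) = 0" by simp
        show "lf n n0 n0 = 0" by (rule n0null)
        have "lf n (f v) n0 = - lf n v (f n0)" unfolding f_def by (rule lf_skew[OF lz])
        then show "lf n (f v) n0 = 0" using fn0 by (simp add: lf_zero_right)
        show "n0 0 \<noteq> 0" by (rule n00)
        show "canon n (f v)" "canon n n0" unfolding f_def by (rule mv_canon, rule cn0)
      qed
      then show ?thesis by blast
    qed
    define w where "w = f u1"
    have ww1: "lf n w w = - c"
    proof -
      have "lf n w w = - lf n u1 (f (f u1))" unfolding w_def f_def by (rule lf_skew[OF lz])
      also have "f (f u1) = A u1" unfolding A_def P_def by (simp add: numeral_2_eq_2)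
      finally show ?thesis unfolding Aform using lf1' by (simp add: lf_smult_right)
    qed
    have fbr: "f u = (\<lambda>i. X (Y u) i - Y (X u) i)" for u
      unfolding f_def X_def Y_def by (rule mv_bracket[OF zdef])
    have term0: "lf n (W w) (V u1) = 0"
      if lw: "lsk n wm" and cw: "\<forall>i<n. \<forall>j<n. (\<Sum>l<n. wm i l * z l j) = (\<Sum>l<n. z i l * wm l j)"
        and Wd: "W = mv n wm" and Wn0: "W n0 = (\<lambda>i. 0)"
        and lv: "lsk n vm" and Vd: "V = mv n vm" and Vn0: "V n0 = (\<lambda>i. 0)" for wm vm W V
    proof -
      have "W w = f (W u1)" unfolding w_def Wd f_def by (rule mv_commute[OF cw])
      moreover have "lf n (W u1) n0 = 0"
      proof -
        have "lf n (W u1) n0 = - lf n u1 (W n0)" unfolding Wd by (rule lf_skew[OF lw])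
        then show ?thesis using Wn0 by (simp add: lf_zero_right)
      qed
      then obtain mu where "f (W u1) = (\<lambda>i. mu * n0 i)" using perp by blast
      ultimately have "lf n (W w) (V u1) = mu * lf n n0 (V u1)" by (simp add: lf_smult_left)
      also have "lf n n0 (V u1) = lf n (V u1) n0" by (rule lf_sym)
      also have "\<dots> = - lf n u1 (V n0)" unfolding Vd by (rule lf_skew[OF lv])
      also have "\<dots> = 0" using Vn0 by (simp add: lf_zero_right)
      finally show ?thesis by simp
    qed
    have "lf n w w = lf n w (f u1)" using w_def by simp
    also have "\<dots> = lf n w (X (Y u1)) - lf n w (Y (X u1))"
      by (simp only: fbr lf_diff_right)
    also have "lf n w (X (Y u1)) = - lf n (X w) (Y u1)"
      using lf_skew[OF lx, of w "Y u1"] unfolding X_def by simp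
    also have "lf n w (Y (X u1)) = - lf n (Y w) (X u1)"
      using lf_skew[OF ly, of w "X u1"] unfolding Y_def by simp
    also have "lf n (X w) (Y u1) = 0" by (rule term0[OF lx cx X_def Xn0 ly Y_def Yn0])
    also have "lf n (Y w) (X u1) = 0" by (rule term0[OF ly cy Y_def Yn0 lx X_def Xn0])
    finally have "lf n w w = 0" by simp
    with ww1 c0 show False by simp
  qed
qed

definition ent :: "real mat \<Rightarrow> nat \<Rightarrow> nat \<Rightarrow> real" where "ent A = (\<lambda>i j. A $$ (i,j))"

lemma mv_ent_mult:
  assumes "A \<in> carrier_mat n n" "B \<in> carrier_mat n n"
  shows "mv n (ent (A*B)) u = mv n (ent A) (mv n (ent B) u)"
proof
  fix i show "mv n (ent (A*B)) u i = mv n (ent A) (mv n (ent B) u) i"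
  proof (cases "i < n")
    case True
    have "mv n (ent (A*B)) u i = (\<Sum>j<n. (A*B) $$ (i,j) * u j)"
      unfolding mv_def ent_def using True by simp
    also have "\<dots> = (\<Sum>j<n. (\<Sum>l<n. A $$ (i,l) * B $$ (l,j)) * u j)"
      by (rule sum.cong[OF refl]) (simp add: mult_ent[OF assms True])
    finally have "mv n (ent (A*B)) u i = (\<Sum>j<n. (\<Sum>l<n. A $$ (i,l) * B $$ (l,j)) * u j)" .
    then show ?thesis using mv_comp[OF True, of "ent A" "ent B" u] unfolding ent_def by simp
  next
    case False then show ?thesis unfolding mv_def by simp
  qed
qed

lemma mv_ent_pow:
  assumes M: "M \<in> carrier_mat n n"
  shows "mv n (ent (M ^\<^sub>m Suc m)) u = (mv n (ent M) ^^ Suc m) u"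
proof (induction m arbitrary: u)
  case 0
  have "M ^\<^sub>m Suc 0 = M" using M by simp
  then show ?case by simp
next
  case (Suc m)
  have e: "M ^\<^sub>m Suc (Suc m) = M ^\<^sub>m Suc m * M" by (simp only: pow_mat.simps(2))
  have "mv n (ent (M ^\<^sub>m Suc (Suc m))) u = mv n (ent (M ^\<^sub>m Suc m)) (mv n (ent M) u)"
    unfolding e by (rule mv_ent_mult[OF pow_carrier_mat[OF M] M])
  also have "\<dots> = (mv n (ent M) ^^ Suc m) (mv n (ent M) u)" by (rule Suc)
  also have "\<dots> = (mv n (ent M) ^^ Suc (Suc m)) u" by (simp only: funpow_Suc_right o_def)
  finally show ?case .
qed

lemma sum_delta_mult:
  fixes c :: "nat \<Rightarrow> real"
  assumes "j < n"
  shows "(\<Sum>l<n. a l * (if l = j then c l else 0)) = a j * c j"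
proof -
  have "(\<Sum>l<n. a l * (if l = j then c l else 0)) = (\<Sum>l<n. if l = j then a l * c l else 0)"
    by (intro sum.cong) auto
  also have "\<dots> = a j * c j" using assms by (simp add: sum.delta')
  finally show ?thesis .
qed

lemma hyp_lsk:
  assumes "A \<in> lie_isom Hyp k"
  shows "lsk (k+1) (ent A)"
  unfolding lsk_def
proof (intro allI impI)
  fix i j assume ij: "i < k+1" "j < k+1"
  let ?J = "lorentz_J (k+1)"
  have A: "A \<in> carrier_mat (k+1) (k+1)" and eq: "transpose_mat A * ?J + ?J * A = 0\<^sub>m (k+1) (k+1)"
    using assms by auto
  have J: "?J \<in> carrier_mat (k+1) (k+1)" unfolding lorentz_J_def by auto
  have Jent: "?J $$ (a,b) = (if a = b then sg a else 0)" if "a < k+1" "b < k+1" for a b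
    unfolding lorentz_J_def sg_def using that by auto
  have "(transpose_mat A * ?J + ?J * A) $$ (i,j) = 0" using eq ij by simp
  moreover have "(transpose_mat A * ?J) $$ (i,j) = A $$ (j,i) * sg j"
  proof -
    have "(transpose_mat A * ?J) $$ (i,j) = (\<Sum>l<k+1. transpose_mat A $$ (i,l) * ?J $$ (l,j))"
      by (rule mult_ent) (use A J ij in auto)
    also have "\<dots> = (\<Sum>l<k+1. A $$ (l,i) * (if l = j then sg l else 0))"
      using A ij Jent by (intro sum.cong) auto
    also have "\<dots> = A $$ (j,i) * sg j" by (rule sum_delta_mult[OF ij(2)])
    finally show ?thesis .
  qed
  moreover have "(?J * A) $$ (i,j) = sg i * A $$ (i,j)"
  proof -
    have "(?J * A) $$ (i,j) = (\<Sum>l<k+1. ?J $$ (i,l) * A $$ (l,j))"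
      by (rule mult_ent) (use A J ij in auto)
    also have "\<dots> = (\<Sum>l<k+1. A $$ (l,j) * (if l = i then sg l else 0))"
      using A ij Jent by (intro sum.cong) auto
    also have "\<dots> = A $$ (i,j) * sg i" by (rule sum_delta_mult[OF ij(1)])
    finally show ?thesis by simp
  qed
  ultimately have "A $$ (j,i) * sg j + sg i * A $$ (i,j) = 0"
    using A J ij by simp
  then show "sg j * ent A j i = - (sg i * ent A i j)" unfolding ent_def by (simp add: algebra_simps)
qed

lemma lie_isom_carrier: "A \<in> lie_isom g k \<Longrightarrow> A \<in> carrier_mat (k+1) (k+1)"
  by (cases g) auto

lemma euc_facts:
  assumes "A \<in> lie_isom Euc k"
  shows "\<forall>j<Suc k. A $$ (k,j) = 0" "\<forall>i<k. \<forall>j<k. A $$ (j,i) = - A $$ (i,j)"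
  using assms unfolding lie_isom.simps mem_Collect_eq Suc_eq_plus1 by blast+

lemma factor_heis:
  assumes X: "X \<in> lie_isom g k" and Y: "Y \<in> lie_isom g k" and Zm: "Z \<in> lie_isom g k"
    and ZXY: "Z = X*Y - Y*X" and XZ: "X*Z - Z*X = 0\<^sub>m (k+1) (k+1)" and YZ: "Y*Z - Z*Y = 0\<^sub>m (k+1) (k+1)"
  shows "Z = 0\<^sub>m (k+1) (k+1)"
proof -
  define n where "n = Suc k"
  have nk: "k + 1 = n" unfolding n_def by simp
  have Xc: "X \<in> carrier_mat n n" and Yc: "Y \<in> carrier_mat n n" and Zc: "Z \<in> carrier_mat n n"
    using lie_isom_carrier[OF X] lie_isom_carrier[OF Y] lie_isom_carrier[OF Zm] unfolding nk by auto
  have XZ': "X*Z = Z*X" using eq_of_minus_zero[of "X*Z" n "Z*X"] XZ Xc Zc unfolding nk by auto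
  have YZ': "Y*Z = Z*Y" using eq_of_minus_zero[of "Y*Z" n "Z*Y"] YZ Yc Zc unfolding nk by auto
  have trW: "mtr (Z * W) = 0" if "W \<in> carrier_mat n n" "X * W = W * X" for W
    using tr_comm_zero[OF Xc Yc that] ZXY by simp
  have trZZ: "mtr (Z*Z) = 0" by (rule trW[OF Zc XZ'])
  have zdef: "\<forall>i<n. \<forall>j<n. Z $$ (i,j) = (\<Sum>l<n. X $$ (i,l) * Y $$ (l,j) - Y $$ (i,l) * X $$ (l,j))"
  proof (intro allI impI)
    fix i j assume ij: "i < n" "j < n"
    have "Z $$ (i,j) = (X*Y) $$ (i,j) - (Y*X) $$ (i,j)" unfolding ZXY using ij Xc Yc by simp
    also have "\<dots> = (\<Sum>l<n. X $$ (i,l) * Y $$ (l,j)) - (\<Sum>l<n. Y $$ (i,l) * X $$ (l,j))"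
      by (simp only: mult_ent[OF Xc Yc ij] mult_ent[OF Yc Xc ij])
    finally show "Z $$ (i,j) = (\<Sum>l<n. X $$ (i,l) * Y $$ (l,j) - Y $$ (i,l) * X $$ (l,j))"
      by (simp add: sum_subtractf)
  qed
  have comm_ent: "\<forall>i<n. \<forall>j<n. (\<Sum>l<n. W $$ (i,l) * Z $$ (l,j)) = (\<Sum>l<n. Z $$ (i,l) * W $$ (l,j))"
    if Wc: "W \<in> carrier_mat n n" and WZ: "W * Z = Z * W" for W
  proof (intro allI impI)
    fix i j assume ij: "i < n" "j < n"
    have "(W*Z) $$ (i,j) = (Z*W) $$ (i,j)" using WZ by simp
    then show "(\<Sum>l<n. W $$ (i,l) * Z $$ (l,j)) = (\<Sum>l<n. Z $$ (i,l) * W $$ (l,j))"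
      by (simp only: mult_ent[OF Wc Zc ij] mult_ent[OF Zc Wc ij])
  qed
  have cx: "\<forall>i<n. \<forall>j<n. (\<Sum>l<n. X $$ (i,l) * Z $$ (l,j)) = (\<Sum>l<n. Z $$ (i,l) * X $$ (l,j))"
    by (rule comm_ent[OF Xc XZ'])
  have cy: "\<forall>i<n. \<forall>j<n. (\<Sum>l<n. Y $$ (i,l) * Z $$ (l,j)) = (\<Sum>l<n. Z $$ (i,l) * Y $$ (l,j))"
    by (rule comm_ent[OF Yc YZ'])
  have ent0: "Z = 0\<^sub>m (k+1) (k+1)" if "\<forall>i<n. \<forall>j<n. Z $$ (i,j) = 0"
    using that Zc unfolding nk by (intro eq_matI) auto
  show ?thesis
  proof (cases g)
    case Sph
    have "transpose_mat Z = - Z" using Zm unfolding Sph by simp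
    then show ?thesis using sph_case[OF Zc _ trZZ] unfolding nk by simp
  next
    case Euc
    have tr: "(\<Sum>i<Suc k. \<Sum>j<Suc k. Z $$ (i,j) * Z $$ (j,i)) = 0"
      using trZZ mtr_mult_entry[OF Zc Zc] unfolding n_def by simp
    note Xf = euc_facts[OF X[unfolded Euc]] and Yf = euc_facts[OF Y[unfolded Euc]]
      and Zf = euc_facts[OF Zm[unfolded Euc]]
    have "\<forall>i<Suc k. \<forall>j<Suc k. Z $$ (i,j) = 0"
      by (rule euc_core[where x="\<lambda>i j. X $$ (i,j)" and y="\<lambda>i j. Y $$ (i,j)" and z="\<lambda>i j. Z $$ (i,j)" and k=k,
        OF Xf(1) Yf(1) Zf(1) Xf(2) Yf(2) Zf(2) zdef[unfolded n_def] cx[unfolded n_def] cy[unfolded n_def] tr])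
    then show ?thesis using ent0 unfolding n_def by simp
  next
    case Hyp
    have tpow: "mtr (Z ^\<^sub>m m) = 0" if m1: "m \<ge> 1" for m
    proof -
      obtain m' where m': "m = Suc m'" using m1 by (cases m) auto
      have comm: "X * Z ^\<^sub>m j = Z ^\<^sub>m j * X" for j
      proof (induction j)
        case 0 then show ?case using Xc Zc by simp
      next
        case (Suc j)
        have Zj: "Z ^\<^sub>m j \<in> carrier_mat n n" using Zc by simp
        have "X * Z ^\<^sub>m Suc j = (X * Z ^\<^sub>m j) * Z" using Xc Zj Zc by (simp add: assoc_mult_mat[of _ n n _ n _ n])
        also have "\<dots> = Z ^\<^sub>m j * (X * Z)" using Xc Zj Zc Suc by (simp add: assoc_mult_mat[of _ n n _ n _ n])
        also have "\<dots> = Z ^\<^sub>m j * (Z * X)" by (simp add: XZ')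
        also have "\<dots> = Z ^\<^sub>m Suc j * X" using Xc Zj Zc by (simp add: assoc_mult_mat[of _ n n _ n _ n])
        finally show ?case .
      qed
      have Zj: "Z ^\<^sub>m m' \<in> carrier_mat n n" using Zc by simp
      have "mtr (Z ^\<^sub>m m) = mtr (Z ^\<^sub>m m' * Z)" using m' by simp
      also have "\<dots> = mtr (Z * Z ^\<^sub>m m')" by (rule mtr_comm[OF Zj Zc])
      also have "\<dots> = 0" by (rule trW[OF Zj comm])
      finally show ?thesis .
    qed
    have Zn: "Z ^\<^sub>m n = 0\<^sub>m n n" by (rule nilpotent_of_traces[OF Zc tpow])
    have nil: "(mv n (ent Z) ^^ n) u = (\<lambda>i. 0)" for u
    proof -
      have "(mv n (ent Z) ^^ Suc k) u = mv n (ent (Z ^\<^sub>m Suc k)) u" by (rule mv_ent_pow[OF Zc, symmetric])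
      also have "\<dots> = (\<lambda>i. 0)" using Zn unfolding n_def mv_def ent_def by auto
      finally show ?thesis unfolding n_def by simp
    qed
    have L: "lsk n (ent X)" "lsk n (ent Y)" "lsk n (ent Z)"
      using hyp_lsk[OF X[unfolded Hyp]] hyp_lsk[OF Y[unfolded Hyp]] hyp_lsk[OF Zm[unfolded Hyp]]
      unfolding nk by auto
    have "\<forall>i<n. \<forall>j<n. ent Z i j = 0"
      by (rule hyp_core[OF L]) (use zdef cx cy nil in \<open>simp_all add: ent_def\<close>)
    then show ?thesis using ent0 unfolding ent_def by simp
  qed
qed

lemma padd_pzero: "padd (pzero fs) (pzero fs) = pzero fs"
  unfolding padd_def pzero_def
  by (induction fs) auto

lemma psmult_pzero: "psmult c (pzero fs) = pzero fs"
  unfolding psmult_def pzero_def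
  by (induction fs) auto

lemma pspan_sub:
  assumes sub: "is_subalgebra fs S" and G: "G \<subseteq> S"
  shows "pspan fs G \<subseteq> S"
proof
  fix x assume "x \<in> pspan fs G"
  then show "x \<in> S"
    by (induction rule: pspan.induct) (use sub G in \<open>auto simp: is_subalgebra_def\<close>)
qed

lemma pspan_zero:
  assumes G: "G \<subseteq> {pzero fs}"
  shows "pspan fs G = {pzero fs}"
proof
  show "pspan fs G \<subseteq> {pzero fs}"
  proof
    fix x assume "x \<in> pspan fs G"
    then show "x \<in> {pzero fs}"
      by (induction rule: pspan.induct) (use G in \<open>auto simp: padd_pzero psmult_pzero\<close>)
  qed
qed (auto intro: pspan.zero)

lemma lcs_sub:
  assumes sub: "is_subalgebra fs S"
  shows "lcs fs S m \<subseteq> S"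
proof (induction m)
  case 0 then show ?case by simp
next
  case (Suc m)
  have "{pbr x y | x y. x \<in> S \<and> y \<in> lcs fs S m} \<subseteq> S"
    using Suc sub unfolding is_subalgebra_def by blast
  then show ?case using pspan_sub[OF sub] by simp
qed

lemma pbr_nth: "i < length xs \<Longrightarrow> i < length ys \<Longrightarrow> pbr xs ys ! i = xs!i * ys!i - ys!i * xs!i"
  unfolding pbr_def by simp

theorem lemma6p31:
  fixes fs :: "(geom \<times> nat) list" and S :: "real mat list set"
  assumes "is_subalgebra fs S" and "is_nilpotent fs S"
  shows "is_abelian fs S"
proof (rule ccontr)
  assume na: "\<not> is_abelian fs S"
  note sub = assms(1)
  have Sc: "S \<subseteq> prod_carrier fs" and brS: "\<And>x y. x \<in> S \<Longrightarrow> y \<in> S \<Longrightarrow> pbr x y \<in> S"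
    using sub unfolding is_subalgebra_def by auto
  from assms(2) obtain N where N: "lcs fs S N = {pzero fs}" unfolding is_nilpotent_def by blast
  define N0 where "N0 = (LEAST N. lcs fs S N = {pzero fs})"
  have N0: "lcs fs S N0 = {pzero fs}" unfolding N0_def by (rule LeastI[of _ N], rule N)
  have N0min: "\<And>m. m < N0 \<Longrightarrow> lcs fs S m \<noteq> {pzero fs}" unfolding N0_def using not_less_Least by blast
  from na obtain x y where xy: "x \<in> S" "y \<in> S" "pbr x y \<noteq> pzero fs" unfolding is_abelian_def by blast
  have "N0 \<noteq> 0"
  proof
    assume "N0 = 0"
    with N0 have "S = {pzero fs}" by simp
    with xy have "x = pzero fs" "y = pzero fs" by auto
    then have "pbr x y \<in> S" using brS xy by auto
    with \<open>S = {pzero fs}\<close> xy show False by auto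
  qed
  have "N0 \<noteq> 1"
  proof
    assume "N0 = 1"
    with N0 have "lcs fs S 1 = {pzero fs}" by simp
    moreover have "pbr x y \<in> lcs fs S 1" using xy by (auto intro: pspan.gen)
    ultimately show False using xy by auto
  qed
  then obtain m where m: "N0 = Suc (Suc m)" using \<open>N0 \<noteq> 0\<close>
    by (metis One_nat_def not0_implies_Suc)
  have ne: "lcs fs S (Suc m) \<noteq> {pzero fs}" using N0min[of "Suc m"] m by (simp del: lcs.simps)
  have "\<not> {pbr a b | a b. a \<in> S \<and> b \<in> lcs fs S m} \<subseteq> {pzero fs}"
    using ne pspan_zero by fastforce
  then obtain a b where ab: "a \<in> S" "b \<in> lcs fs S m" "pbr a b \<noteq> pzero fs" by blast
  have bS: "b \<in> S" using ab(2) lcs_sub[OF sub] by blast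
  define z where "z = pbr a b"
  have zL: "z \<in> lcs fs S (Suc m)" unfolding z_def using ab by (auto intro: pspan.gen)
  have zS: "z \<in> S" using zL lcs_sub[OF sub] by blast
  have comm: "pbr s z = pzero fs" if "s \<in> S" for s
  proof -
    have "pbr s z \<in> lcs fs S (Suc (Suc m))" using that zL by (auto intro: pspan.gen)
    then show ?thesis using N0 m by simp
  qed
  have len: "length a = length fs" "length b = length fs" "length z = length fs"
    using ab(1) bS zS Sc unfolding prod_carrier_def by auto
  have pz_len: "length (pzero fs) = length fs" unfolding pzero_def by simp
  have pz_nth: "pzero fs ! i = 0\<^sub>m (snd (fs!i) + 1) (snd (fs!i) + 1)" if "i < length fs" for i
    unfolding pzero_def using that by (simp add: case_prod_beta)
  from ab(3) obtain i where i: "i < length fs" "z ! i \<noteq> pzero fs ! i"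
    unfolding z_def[symmetric] using len(3) pz_len by (metis nth_equalityI)
  define g k where "g = fst (fs!i)" and "k = snd (fs!i)"
  have mem: "a!i \<in> lie_isom g k" "b!i \<in> lie_isom g k" "z!i \<in> lie_isom g k"
    using ab(1) bS zS Sc i(1) unfolding prod_carrier_def g_def k_def by auto
  have zi: "z!i = a!i * b!i - b!i * a!i" unfolding z_def using len i by (simp add: pbr_nth)
  have c1: "a!i * z!i - z!i * a!i = 0\<^sub>m (k+1) (k+1)"
    using arg_cong[OF comm[OF ab(1)], of "\<lambda>l. l!i"] len i pz_nth unfolding k_def by (simp add: pbr_nth)
  have c2: "b!i * z!i - z!i * b!i = 0\<^sub>m (k+1) (k+1)"
    using arg_cong[OF comm[OF bS], of "\<lambda>l. l!i"] len i pz_nth unfolding k_def by (simp add: pbr_nth)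
  have "z!i = 0\<^sub>m (k+1) (k+1)" by (rule factor_heis[OF mem zi c1 c2])
  with i pz_nth show False unfolding k_def by simp
qed

end
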